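(* Let $(G,\mathcal{B}_1,\mathcal{B}_2)$ be a Rota-Baxter system of groups with cocycle $\Phi$. For every $t\in G$, let $\Phi_t$ be the restriction of $\Phi$ to $G_t$. Then $\operatorname{Im}(\Phi_t)=\operatorname{Im}(\Phi)=G_{1_G}$ for every $t\in G$, and $\Phi_{1_G}:G_{1_G}\to G_{1_G}$ is a bijection.
   Context: A Rota-Baxter system of groups is a triple $(G,\mathcal{B}_1,\mathcal{B}_2)$ where $G$ is a group with identity $1_G$ and $\mathcal{B}_1,\mathcal{B}_2:G\to G$ are maps such that for all $a,b\in G$: $\mathcal{B}_1(a)\mathcal{B}_1(b)=\mathcal{B}_1(\mathcal{B}_1(a)b\mathcal{B}_2(a))$ and $\mathcal{B}_2(b)\mathcal{B}_2(a)=\mathcal{B}_2(\mathcal{B}_1(a)b\mathcal{B}_2(a))$. Descendent operation: $a\circ b=\mathcal{B}_1(a)b\mathcal{B}_2(a)$; cocycle: $\Phi(a)=\mathcal{B}_1(a)\mathcal{B}_2(a)$. For $t\in G$: $e_t=\mathcal{B}_1(t)^{-1}t\mathcal{B}_2(t)^{-1}$ and $G_t=\{a\in G\mid a\circ e_t=a\}$. *)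

theory Defs
  imports "HOL-Algebra.Group"
begin

definition RB_system :: "('a, 'b) monoid_scheme \<Rightarrow> ('a \<Rightarrow> 'a) \<Rightarrow> ('a \<Rightarrow> 'a) \<Rightarrow> bool" where
  "RB_system G B1 B2 \<longleftrightarrow> group G
     \<and> B1 \<in> carrier G \<rightarrow> carrier G \<and> B2 \<in> carrier G \<rightarrow> carrier G
     \<and> (\<forall>a\<in>carrier G. \<forall>b\<in>carrier G.
          B1 a \<otimes>\<^bsub>G\<^esub> B1 b = B1 (B1 a \<otimes>\<^bsub>G\<^esub> b \<otimes>\<^bsub>G\<^esub> B2 a)
        \<and> B2 b \<otimes>\<^bsub>G\<^esub> B2 a = B2 (B1 a \<otimes>\<^bsub>G\<^esub> b \<otimes>\<^bsub>G\<^esub> B2 a))"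

definition RB_desc :: "('a, 'b) monoid_scheme \<Rightarrow> ('a \<Rightarrow> 'a) \<Rightarrow> ('a \<Rightarrow> 'a) \<Rightarrow> 'a \<Rightarrow> 'a \<Rightarrow> 'a" where
  "RB_desc G B1 B2 a b = B1 a \<otimes>\<^bsub>G\<^esub> b \<otimes>\<^bsub>G\<^esub> B2 a"

definition RB_cocycle :: "('a, 'b) monoid_scheme \<Rightarrow> ('a \<Rightarrow> 'a) \<Rightarrow> ('a \<Rightarrow> 'a) \<Rightarrow> 'a \<Rightarrow> 'a" where
  "RB_cocycle G B1 B2 a = B1 a \<otimes>\<^bsub>G\<^esub> B2 a"

definition RB_e :: "('a, 'b) monoid_scheme \<Rightarrow> ('a \<Rightarrow> 'a) \<Rightarrow> ('a \<Rightarrow> 'a) \<Rightarrow> 'a \<Rightarrow> 'a" where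
  "RB_e G B1 B2 t = inv\<^bsub>G\<^esub> (B1 t) \<otimes>\<^bsub>G\<^esub> t \<otimes>\<^bsub>G\<^esub> inv\<^bsub>G\<^esub> (B2 t)"

definition RB_Gt :: "('a, 'b) monoid_scheme \<Rightarrow> ('a \<Rightarrow> 'a) \<Rightarrow> ('a \<Rightarrow> 'a) \<Rightarrow> 'a \<Rightarrow> 'a set" where
  "RB_Gt G B1 B2 t = {a \<in> carrier G. RB_desc G B1 B2 a (RB_e G B1 B2 t) = a}"

end

theory Submission
  imports Defs
begin

locale RBsys = group G for G :: "('a, 'b) monoid_scheme" (structure) +
  fixes B1 B2 :: "'a \<Rightarrow> 'a"
  assumes B1c: "a \<in> carrier G \<Longrightarrow> B1 a \<in> carrier G"
    and B2c: "a \<in> carrier G \<Longrightarrow> B2 a \<in> carrier G"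
    and ax1: "a \<in> carrier G \<Longrightarrow> b \<in> carrier G \<Longrightarrow> B1 a \<otimes> B1 b = B1 (B1 a \<otimes> b \<otimes> B2 a)"
    and ax2: "a \<in> carrier G \<Longrightarrow> b \<in> carrier G \<Longrightarrow> B2 b \<otimes> B2 a = B2 (B1 a \<otimes> b \<otimes> B2 a)"
begin

abbreviation D where "D \<equiv> RB_desc G B1 B2"

lemma Dc[simp]: "a \<in> carrier G \<Longrightarrow> b \<in> carrier G \<Longrightarrow> D a b \<in> carrier G"
  by (simp add: RB_desc_def B1c B2c)

lemma B1D: "a \<in> carrier G \<Longrightarrow> b \<in> carrier G \<Longrightarrow> B1 (D a b) = B1 a \<otimes> B1 b"
  by (simp add: RB_desc_def ax1)

lemma B2D: "a \<in> carrier G \<Longrightarrow> b \<in> carrier G \<Longrightarrow> B2 (D a b) = B2 b \<otimes> B2 a"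
  by (simp add: RB_desc_def ax2)

lemma Dassoc: "a \<in> carrier G \<Longrightarrow> b \<in> carrier G \<Longrightarrow> c \<in> carrier G \<Longrightarrow>
   D (D a b) c = D a (D b c)"
proof -
  assume a: "a \<in> carrier G" and b: "b \<in> carrier G" and c: "c \<in> carrier G"
  have "D (D a b) c = B1 (D a b) \<otimes> c \<otimes> B2 (D a b)" by (simp add: RB_desc_def)
  also have "\<dots> = B1 a \<otimes> B1 b \<otimes> c \<otimes> (B2 b \<otimes> B2 a)" using a b by (simp add: B1D B2D)
  also have "\<dots> = D a (D b c)" using a b c by (simp add: RB_desc_def B1c B2c m_assoc)
  finally show ?thesis .
qed

lemma Dsolve: "a \<in> carrier G \<Longrightarrow> c \<in> carrier G \<Longrightarrow>
   D a (inv (B1 a) \<otimes> c \<otimes> inv (B2 a)) = c"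
  by (simp add: RB_desc_def B1c B2c m_assoc flip: m_assoc[of "B1 a"])

lemma B1sol: "a \<in> carrier G \<Longrightarrow> c \<in> carrier G \<Longrightarrow>
   B1 (inv (B1 a) \<otimes> c \<otimes> inv (B2 a)) = inv (B1 a) \<otimes> B1 c"
proof -
  assume a: "a \<in> carrier G" and c: "c \<in> carrier G"
  let ?x = "inv (B1 a) \<otimes> c \<otimes> inv (B2 a)"
  have x: "?x \<in> carrier G" using a c by (simp add: B1c B2c)
  have "B1 a \<otimes> B1 ?x = B1 c" using B1D[OF a x] Dsolve[OF a c] by simp
  then show ?thesis using a c x B1c
    by (metis inv_solve_left)
qed

lemma B2sol: "a \<in> carrier G \<Longrightarrow> c \<in> carrier G \<Longrightarrow>
   B2 (inv (B1 a) \<otimes> c \<otimes> inv (B2 a)) = B2 c \<otimes> inv (B2 a)"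
proof -
  assume a: "a \<in> carrier G" and c: "c \<in> carrier G"
  let ?x = "inv (B1 a) \<otimes> c \<otimes> inv (B2 a)"
  have x: "?x \<in> carrier G" using a c by (simp add: B1c B2c)
  have "B2 ?x \<otimes> B2 a = B2 c" using B2D[OF a x] Dsolve[OF a c] by simp
  then show ?thesis using a c x B2c
    by (metis inv_solve_right)
qed

lemma ec[simp]: "t \<in> carrier G \<Longrightarrow> RB_e G B1 B2 t \<in> carrier G"
  by (simp add: RB_e_def B1c B2c)

lemma B1e: "t \<in> carrier G \<Longrightarrow> B1 (RB_e G B1 B2 t) = \<one>"
  unfolding RB_e_def by (simp add: B1sol B1c)

lemma B2e: "t \<in> carrier G \<Longrightarrow> B2 (RB_e G B1 B2 t) = \<one>"
  unfolding RB_e_def by (simp add: B2sol B2c)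

lemma eleft: "t \<in> carrier G \<Longrightarrow> x \<in> carrier G \<Longrightarrow> D (RB_e G B1 B2 t) x = x"
  by (simp add: RB_desc_def B1e B2e)

lemma Phi: "x \<in> carrier G \<Longrightarrow> RB_cocycle G B1 B2 x = D x \<one>"
  by (simp add: RB_desc_def RB_cocycle_def B1c)

lemma Phic[simp]: "x \<in> carrier G \<Longrightarrow> RB_cocycle G B1 B2 x \<in> carrier G"
  by (simp add: RB_cocycle_def B1c B2c)

abbreviation P where "P \<equiv> RB_cocycle G B1 B2"
abbreviation E where "E \<equiv> RB_e G B1 B2"
abbreviation Y where "Y \<equiv> inv (B1 \<one>) \<otimes> E \<one> \<otimes> inv (B2 \<one>)"

lemma Yc[simp]: "Y \<in> carrier G" by (simp add: B1c B2c)

lemma D1e: "D \<one> (E \<one>) = \<one>"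
  using Dsolve[of \<one> \<one>] by (simp add: RB_e_def)

lemma D1Y: "D \<one> Y = E \<one>"
  using Dsolve[of \<one> "E \<one>"] by simp

lemma DY1: "D Y \<one> = E \<one>"
proof -
  have "D Y \<one> = B1 Y \<otimes> B2 Y" by (simp add: RB_desc_def B1c B2c)
  also have "\<dots> = inv (B1 \<one>) \<otimes> inv (B2 \<one>)"
    by (simp add: B1sol B2sol B1e B2e B1c B2c)
  finally show ?thesis by (simp add: RB_e_def B1c B2c)
qed

lemma img_sub: "x \<in> carrier G \<Longrightarrow> P x \<in> RB_Gt G B1 B2 \<one>"
  by (simp add: RB_Gt_def Phi Dassoc D1e)

lemma proj: "t \<in> carrier G \<Longrightarrow> x \<in> carrier G \<Longrightarrow> D x (E t) \<in> RB_Gt G B1 B2 t"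
  by (simp add: RB_Gt_def Dassoc eleft)

lemma Phi_proj: "t \<in> carrier G \<Longrightarrow> x \<in> carrier G \<Longrightarrow> P (D x (E t)) = P x"
  by (simp add: Phi Dassoc eleft)

lemma surj1: "a \<in> RB_Gt G B1 B2 \<one> \<Longrightarrow> P (D a Y) = a"
  by (simp add: RB_Gt_def Phi Dassoc DY1)

lemma recov: "a \<in> RB_Gt G B1 B2 \<one> \<Longrightarrow> D (P a) Y = a"
  by (simp add: RB_Gt_def Phi Dassoc D1Y)

lemma main:
  shows "(\<forall>t\<in>carrier G.
            P ` RB_Gt G B1 B2 t = P ` carrier G
          \<and> P ` carrier G = RB_Gt G B1 B2 \<one>)
       \<and> bij_betw P (RB_Gt G B1 B2 \<one>) (RB_Gt G B1 B2 \<one>)"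
proof -
  have A: "P ` RB_Gt G B1 B2 t = P ` carrier G" if t: "t \<in> carrier G" for t
  proof
    show "P ` RB_Gt G B1 B2 t \<subseteq> P ` carrier G" by (auto simp: RB_Gt_def)
    show "P ` carrier G \<subseteq> P ` RB_Gt G B1 B2 t"
    proof
      fix z assume "z \<in> P ` carrier G"
      then obtain x where x: "x \<in> carrier G" "z = P x" by auto
      then show "z \<in> P ` RB_Gt G B1 B2 t"
        using Phi_proj[OF t x(1)] proj[OF t x(1)] by (metis image_eqI)
    qed
  qed
  have B: "P ` carrier G = RB_Gt G B1 B2 \<one>"
  proof
    show "P ` carrier G \<subseteq> RB_Gt G B1 B2 \<one>" using img_sub by auto
    show "RB_Gt G B1 B2 \<one> \<subseteq> P ` carrier G"
    proof
      fix a assume a: "a \<in> RB_Gt G B1 B2 \<one>"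
      then have "a \<in> carrier G" by (simp add: RB_Gt_def)
      then show "a \<in> P ` carrier G" using surj1[OF a] by (metis Dc Yc image_eqI)
    qed
  qed
  have C: "inj_on P (RB_Gt G B1 B2 \<one>)"
    by (metis inj_onI recov)
  show ?thesis using A B C A[of \<one>] by (simp add: bij_betw_def)
qed

end

theorem proposition4p4:
  fixes G :: "('a, 'b) monoid_scheme" and B1 B2 :: "'a \<Rightarrow> 'a"
  assumes "RB_system G B1 B2"
  shows "(\<forall>t\<in>carrier G.
            RB_cocycle G B1 B2 ` RB_Gt G B1 B2 t = RB_cocycle G B1 B2 ` carrier G
          \<and> RB_cocycle G B1 B2 ` carrier G = RB_Gt G B1 B2 \<one>\<^bsub>G\<^esub>)
       \<and> bij_betw (RB_cocycle G B1 B2) (RB_Gt G B1 B2 \<one>\<^bsub>G\<^esub>) (RB_Gt G B1 B2 \<one>\<^bsub>G\<^esub>)"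
proof -
  interpret group G using assms unfolding RB_system_def by simp
  interpret RBsys G B1 B2
    using assms unfolding RB_system_def
    by (unfold_locales) (auto simp: Pi_def)
  show ?thesis by (rule main)
qed

end
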